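(* Let $0<a\le1\le b<\infty$, $\varphi(s)=\max\{s^a,s^b\}$ for $s>0$, let $c,d>0$ with $cd\le1$, and $g(x)=xF(c,d;c+d;x)$ for $x\in(0,1)$. Then for every $s>0$, $$g\!\left(\frac{\varphi(s)}{1+\varphi(s)}\right)\le\frac ba\max\left\{g^a\!\left(\frac{s}{1+s}\right),\ g\!\left(\frac{s}{1+s}\right)\right\}.$$
   Context: $F(a,b;c;x)$ is the Gaussian hypergeometric function $\sum_{n\ge0}\frac{(a)_n(b)_n}{(c)_n}\frac{x^n}{n!}$ ($|x|<1$), with $(a)_n=a(a+1)\cdots(a+n-1)$, $(a)_0=1$. Here $g^a(y)$ means $(g(y))^a$, and the exponents $a,b$ are distinct from the hypergeometric parameters $c,d$. *)

theory Defs
  imports "HOL-Analysis.Analysis"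
begin

definition hyp2F1 :: "real \<Rightarrow> real \<Rightarrow> real \<Rightarrow> real \<Rightarrow> real" where
  "hyp2F1 a b c x = (\<Sum>n. pochhammer a n * pochhammer b n / (pochhammer c n * fact n) * x ^ n)"

end

theory Submission
  imports Defs
begin

definition AA :: "real \<Rightarrow> real \<Rightarrow> nat \<Rightarrow> real" where
  "AA c d n = pochhammer c n * pochhammer d n / (pochhammer (c + d) n * fact n)"

context
  fixes c d :: real
  assumes cpos: "0 < c" and dpos: "0 < d" and cd1: "c * d \<le> 1"
begin

lemma AA_pos: "0 < AA c d n"
  unfolding AA_def using cpos dpos by (auto intro!: divide_pos_pos mult_pos_pos pochhammer_pos)

lemma AA_0: "AA c d 0 = 1"
  unfolding AA_def by simp

lemma AA_Suc: "AA c d (Suc n) = AA c d n * ((c + n) * (d + n) / ((c + d + n) * (n + 1)))"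
proof -
  have p: "pochhammer (c+d) n > 0" using cpos dpos by (auto intro!: pochhammer_pos)
  have f: "(fact n :: real) > 0" by simp
  have q: "c + d + n > 0" using cpos dpos by simp
  show ?thesis unfolding AA_def pochhammer_Suc fact_Suc
    using p f q by (simp add: field_simps)
qed

lemma beta_dec: "real (Suc (Suc n)) * AA c d (Suc n) \<le> real (Suc n) * AA c d n"
proof -
  have h2: "2 * (c * d) \<le> c + d"
  proof -
    have "(2*(c*d))^2 \<le> (c+d)^2"
    proof -
      have "(c*d)*(c*d) \<le> c*d" using cd1 cpos dpos by (simp add: mult_le_cancel_left1)
      moreover have "4*(c*d) \<le> (c+d)^2"
      proof -
        have "0 \<le> (c-d)^2" by simp
        also have "(c-d)^2 = (c+d)^2 - 4*(c*d)" by (simp add: power2_eq_square algebra_simps)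
        finally show ?thesis by simp
      qed
      ultimately show ?thesis by (simp add: power2_eq_square)
    qed
    then show ?thesis using cpos dpos by (smt (verit) power2_le_imp_le)
  qed
  have key: "(n+2) * ((c + n) * (d + n)) \<le> (n+1)^2 * (c + d + n)"
  proof -
    have e: "(n+1)^2 * (c + d + n) - (n+2) * ((c + n) * (d + n)) = (1 - c*d)*n + (c+d-2*(c*d))"
      by (simp add: power2_eq_square algebra_simps)
    have "0 \<le> (1 - c*d)*n + (c+d-2*(c*d))" using h2 cd1 by simp
    then show ?thesis using e by linarith
  qed
  have q: "c + d + n > 0" using cpos dpos by simp
  have A: "AA c d n > 0" by (rule AA_pos)
  have "real (Suc (Suc n)) * AA c d (Suc n) = AA c d n * ((n+2) * ((c + n) * (d + n)) / ((c + d + n) * (n + 1)))"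
    unfolding AA_Suc by simp
  also have "\<dots> \<le> AA c d n * ((n+1)^2 * (c + d + n) / ((c + d + n) * (n + 1)))"
    using key A q by (intro mult_left_mono divide_right_mono) auto
  also have "(n+1)^2 * (c + d + n) / ((c + d + n) * (n + 1)) = real n + 1"
  proof -
    have D: "(c+d+n)*(n+1) \<noteq> 0" using q by simp
    have "(n+1)^2*(c+d+n) = (real n+1) * ((c+d+n)*(n+1))" by (simp add: power2_eq_square algebra_simps)
    then show ?thesis using D by simp
  qed
  then have "AA c d n * ((n+1)^2 * (c + d + n) / ((c + d + n) * (n + 1))) = real (Suc n) * AA c d n"
    by simp
  finally show ?thesis by simp
qed

lemma beta_decseq: "decseq (\<lambda>n. real (Suc n) * AA c d n)"
  by (rule decseq_SucI) (rule beta_dec)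

lemma beta_le1: "real (Suc n) * AA c d n \<le> 1"
  using decseqD[OF beta_decseq, of 0 n] by (simp add: AA_0)

lemma beta_pos: "0 < real (Suc n) * AA c d n"
  using AA_pos[of n] by simp

lemma AA_le1: "AA c d n \<le> 1"
proof -
  have "1 * AA c d n \<le> real (Suc n) * AA c d n"
    using AA_pos[of n] by (intro mult_right_mono) auto
  then show ?thesis using beta_le1[of n] by simp
qed

lemma AA_dec: "AA c d (Suc n) \<le> AA c d n"
proof -
  have "real (Suc n) * AA c d (Suc n) \<le> real (Suc (Suc n)) * AA c d (Suc n)"
    using AA_pos[of "Suc n"] by (intro mult_right_mono) auto
  also have "\<dots> \<le> real (Suc n) * AA c d n" by (rule beta_dec)
  finally show ?thesis by simp
qed

lemma summ_AA: assumes "\<bar>r\<bar> < 1" shows "summable (\<lambda>n. AA c d n * r ^ n)"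
proof (rule summable_comparison_test')
  show "summable (\<lambda>n. \<bar>r\<bar> ^ n)" using assms by (simp add: summable_geometric)
  fix n
  show "norm (AA c d n * r ^ n) \<le> \<bar>r\<bar> ^ n"
    using AA_le1[of n] AA_pos[of n] by (simp add: abs_mult power_abs mult_left_le_one_le)
qed

lemma summ_beta: assumes "\<bar>r\<bar> < 1" shows "summable (\<lambda>n. real (Suc n) * AA c d n * r ^ n)"
proof (rule summable_comparison_test')
  show "summable (\<lambda>n. \<bar>r\<bar> ^ n)" using assms by (simp add: summable_geometric)
  fix n
  show "norm (real (Suc n) * AA c d n * r ^ n) \<le> \<bar>r\<bar> ^ n"
    using beta_le1[of n] beta_pos[of n] by (simp add: abs_mult power_abs mult_left_le_one_le del: of_nat_Suc)
qed

definition FF :: "real \<Rightarrow> real" where "FF x = (\<Sum>n. AA c d n * x ^ n)"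
definition FF' :: "real \<Rightarrow> real" where "FF' x = (\<Sum>n. diffs (AA c d) n * x ^ n)"

lemma FF_deriv: assumes "\<bar>x\<bar> < 1" shows "DERIV FF x :> FF' x"
proof -
  let ?K = "(1 + \<bar>x\<bar>) / 2"
  have "summable (\<lambda>n. AA c d n * ?K ^ n)" using assms by (intro summ_AA) auto
  moreover have "norm x < norm ?K" using assms by auto
  ultimately have "DERIV (\<lambda>x. \<Sum>n. AA c d n * x^n) x :> (\<Sum>n. diffs (AA c d) n * x^n)"
    by (rule termdiffs_strong)
  then show ?thesis unfolding FF_def[abs_def] FF'_def by simp
qed

lemma FF_sums: "\<bar>x\<bar> < 1 \<Longrightarrow> (\<lambda>n. AA c d n * x ^ n) sums FF x"
  unfolding FF_def by (rule summable_sums, rule summ_AA)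

lemma FF_ge1: assumes "0 \<le> x" "x < 1" shows "1 \<le> FF x"
proof -
  have "(\<lambda>n. if n = 0 then 1 else 0) sums (1::real)"
    using sums_single[of 0 "\<lambda>_. 1::real"] by simp
  moreover have "(\<lambda>n. AA c d n * x ^ n) sums FF x" using assms by (intro FF_sums) auto
  moreover have le: "(if n = 0 then 1 else 0) \<le> AA c d n * x ^ n" for n
  proof (cases n)
    case 0 then show ?thesis by (simp add: AA_0)
  next
    case (Suc m) then show ?thesis using AA_pos[of n] assms by simp
  qed
  ultimately show ?thesis
    using sums_le[of "\<lambda>n. if n = 0 then 1 else 0" "\<lambda>n. AA c d n * x ^ n", OF le] by blast
qed

lemma beta_sums: assumes "\<bar>x\<bar> < 1"
  shows "(\<lambda>n. real (Suc n) * AA c d n * x ^ n) sums (FF x + x * FF' x)"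
proof -
  have s1: "(\<lambda>n. diffs (AA c d) n * x ^ n) sums FF' x"
    unfolding FF'_def
  proof (rule summable_sums, rule summable_comparison_test')
    show "summable (\<lambda>n. \<bar>x\<bar> ^ n)" using assms by (simp add: summable_geometric)
    fix n
    have "real (Suc n) * AA c d (Suc n) \<le> real (Suc (Suc n)) * AA c d (Suc n)"
      using AA_pos[of "Suc n"] by (intro mult_right_mono) auto
    also have "\<dots> \<le> 1" by (rule beta_le1)
    finally have "real (Suc n) * AA c d (Suc n) \<le> 1" .
    moreover have "0 \<le> real (Suc n) * AA c d (Suc n)" using AA_pos[of "Suc n"] by simp
    ultimately show "norm (diffs (AA c d) n * x ^ n) \<le> \<bar>x\<bar> ^ n"
      by (simp add: diffs_def abs_mult power_abs mult_left_le_one_le del: of_nat_Suc)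
  qed
  have "(\<lambda>n. x * (diffs (AA c d) n * x ^ n)) sums (x * FF' x)" by (rule sums_mult[OF s1])
  then have "(\<lambda>n. (\<lambda>m. real m * AA c d m * x ^ m) (Suc n)) sums (x * FF' x)"
    by (simp add: diffs_def algebra_simps)
  then have s2: "(\<lambda>m. real m * AA c d m * x ^ m) sums (x * FF' x)"
    by (subst (asm) sums_Suc_iff) simp
  have "(\<lambda>n. AA c d n * x ^ n + real n * AA c d n * x ^ n) sums (FF x + x * FF' x)"
    by (rule sums_add[OF FF_sums[OF assms] s2])
  then show ?thesis by (simp add: algebra_simps)
qed

lemma EE_sums: assumes "\<bar>x\<bar> < 1"
  shows "(\<lambda>n. (AA c d n - (if n = 0 then 0 else AA c d (n - 1))) * x ^ n) sums ((1 - x) * FF x)"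
proof -
  have "(\<lambda>n. x * (AA c d n * x ^ n)) sums (x * FF x)" by (rule sums_mult[OF FF_sums[OF assms]])
  then have "(\<lambda>n. (\<lambda>m. if m = 0 then 0 else AA c d (m - 1) * x ^ m) (Suc n)) sums (x * FF x)"
    by (simp add: algebra_simps)
  then have s2: "(\<lambda>m. if m = 0 then 0 else AA c d (m - 1) * x ^ m) sums (x * FF x)"
    by (subst (asm) sums_Suc_iff) simp
  have "(\<lambda>n. AA c d n * x ^ n - (if n = 0 then 0 else AA c d (n - 1) * x ^ n)) sums (FF x - x * FF x)"
    by (rule sums_diff[OF FF_sums[OF assms] s2])
  moreover have "(\<lambda>n. AA c d n * x ^ n - (if n = 0 then 0 else AA c d (n - 1) * x ^ n))
     = (\<lambda>n. (AA c d n - (if n = 0 then 0 else AA c d (n - 1))) * x ^ n)"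
    by (auto simp: fun_eq_iff algebra_simps)
  ultimately show ?thesis by (simp add: algebra_simps)
qed

lemma EE_antimono: assumes "0 \<le> x" "x \<le> y" "y < 1"
  shows "(1 - y) * FF y \<le> (1 - x) * FF x"
proof (rule sums_le[OF _ EE_sums EE_sums])
  fix n
  show "(AA c d n - (if n = 0 then 0 else AA c d (n - 1))) * y ^ n
      \<le> (AA c d n - (if n = 0 then 0 else AA c d (n - 1))) * x ^ n"
  proof (cases n)
    case 0 then show ?thesis by simp
  next
    case (Suc m)
    have "AA c d n - AA c d (n - 1) \<le> 0" using AA_dec[of m] Suc by simp
    moreover have "x ^ n \<le> y ^ n" using assms by (intro power_mono) auto
    ultimately show ?thesis using Suc by (simp add: mult_left_mono_neg)
  qed
qed (use assms in auto)

lemma log_sums: assumes "0 < X" "X < 1"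
  shows "(\<lambda>n. X ^ Suc n / real (Suc n)) sums (- ln (1 - X))"
proof -
  have sl: "summable (\<lambda>n. X ^ Suc n / real (Suc n))"
  proof (rule summable_comparison_test')
    show "summable (\<lambda>n. X ^ n)" using assms by (simp add: summable_geometric)
    fix n
    have "X ^ Suc n \<le> X ^ n" using assms by (simp add: mult_left_le_one_le)
    moreover have "X ^ Suc n / real (Suc n) \<le> X ^ Suc n"
      using divide_left_mono[of 1 "real (Suc n)" "X ^ Suc n"] assms by simp
    ultimately have le: "X ^ Suc n / real (Suc n) \<le> X ^ n" by (rule order_trans[rotated])
    have nn: "0 \<le> X ^ Suc n / real (Suc n)" using assms by simp
    show "norm (X ^ Suc n / real (Suc n)) \<le> X ^ n"
      using le by (simp only: real_norm_def abs_of_nonneg[OF nn])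
  qed
  have eq: "(\<lambda>n. (-1)^n * (1 / real (n + 1)) * ((1 - X) - 1)^(Suc n)) = (\<lambda>n. - (X ^ Suc n / real (Suc n)))"
  proof
    fix n
    have p: "(-1::real)^n * (-X)^n = X^n" by (simp add: power_mult_distrib[symmetric])
    have "(-1)^n * (1 / real (n + 1)) * ((1 - X) - 1)^(Suc n) = - (1/real(n+1)) * X * ((-1)^n * (-X)^n)"
      by (simp add: algebra_simps)
    also have "\<dots> = - (X ^ Suc n / real (Suc n))" unfolding p by simp
    finally show "(-1)^n * (1 / real (n + 1)) * ((1 - X) - 1)^(Suc n) = - (X ^ Suc n / real (Suc n))" .
  qed
  have "ln (1 - X) = (\<Sum>n. - (X ^ Suc n / real (Suc n)))"
    using ln_series[of "1 - X"] assms eq by simp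
  also have "\<dots> = - (\<Sum>n. X ^ Suc n / real (Suc n))" by (rule suminf_minus[OF sl])
  finally show ?thesis using summable_sums[OF sl] by simp
qed

lemma key_ineq: assumes "0 < t"
  shows "t * ((exp t / (1 + exp t)) * (1 - exp t / (1 + exp t))) *
      (FF (exp t / (1 + exp t)) + (exp t / (1 + exp t)) * FF' (exp t / (1 + exp t)))
      \<le> (exp t / (1 + exp t)) * FF (exp t / (1 + exp t))"
proof -
  define X where "X = exp t / (1 + exp t)"
  have X0: "0 < X" unfolding X_def by (simp add: add_pos_pos)
  have ep: "0 < 1 + exp t" by (simp add: add_pos_pos)
  have X1: "X < 1" unfolding X_def using ep by (simp add: divide_less_eq)
  have "1 / (1 + exp t) + exp t / (1 + exp t) = 1" using ep by (simp add: add_divide_distrib[symmetric])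
  then have omX: "1 - X = 1 / (1 + exp t)" unfolding X_def by linarith
  have tX: "t = ln X - ln (1 - X)"
    unfolding omX unfolding X_def using ep by (simp add: ln_div)
  define \<theta> where "\<theta> = t * (1 - X)"
  have th0: "0 < \<theta>" unfolding \<theta>_def using assms X1 by simp
  have aX: "\<bar>X\<bar> < 1" using X0 X1 by simp
  define \<beta> where "\<beta> = (\<lambda>n. real (Suc n) * AA c d n)"
  define dd where "dd = (\<lambda>n. X ^ Suc n * (1 / real (Suc n) - \<theta>))"
  have Sb: "(\<lambda>n. \<theta> * X * (\<beta> n * X ^ n)) sums (\<theta> * X * (FF X + X * FF' X))"
    unfolding \<beta>_def by (rule sums_mult[OF beta_sums[OF aX]])
  have Sa: "(\<lambda>n. X * (AA c d n * X ^ n)) sums (X * FF X)"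
    by (rule sums_mult[OF FF_sums[OF aX]])
  have "(\<lambda>n. X * (AA c d n * X ^ n) - \<theta> * X * (\<beta> n * X ^ n)) sums (X * FF X - \<theta> * X * (FF X + X * FF' X))"
    by (rule sums_diff[OF Sa Sb])
  moreover have "(\<lambda>n. X * (AA c d n * X ^ n) - \<theta> * X * (\<beta> n * X ^ n)) = (\<lambda>n. \<beta> n * dd n)"
    unfolding \<beta>_def dd_def by (auto simp: fun_eq_iff field_simps simp del: of_nat_Suc)
  ultimately have S1: "(\<lambda>n. \<beta> n * dd n) sums (X * FF X - \<theta> * X * (FF X + X * FF' X))" by simp
  have G: "(\<lambda>n. X * X ^ n) sums (X * (1 / (1 - X)))"
    by (rule sums_mult, rule geometric_sums) (use aX in simp)
  have "(\<lambda>n. X ^ Suc n / real (Suc n) - \<theta> * (X * X ^ n)) sums (- ln (1 - X) - \<theta> * (X * (1 / (1 - X))))"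
    by (rule sums_diff[OF log_sums[OF X0 X1] sums_mult[OF G]])
  moreover have "(\<lambda>n. X ^ Suc n / real (Suc n) - \<theta> * (X * X ^ n)) = dd"
    unfolding dd_def by (auto simp: fun_eq_iff field_simps simp del: of_nat_Suc)
  moreover have "\<theta> * (X * (1 / (1 - X))) = t * X" unfolding \<theta>_def using X1 by simp
  ultimately have Sd: "dd sums (- ln (1 - X) - t * X)" by simp
  define N where "N = nat \<lfloor>1 / \<theta>\<rfloor>"
  define C where "C = \<beta> N"
  have C0: "0 \<le> C" unfolding C_def \<beta>_def using AA_pos[of N] by simp
  have flo: "real N = of_int \<lfloor>1 / \<theta>\<rfloor>" unfolding N_def using th0 by simp
  have termw: "C * dd n \<le> \<beta> n * dd n" for n
  proof (cases "n < N")
    case True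
    have "real (Suc n) \<le> real N" using True by simp
    also have "\<dots> \<le> 1 / \<theta>" using flo by simp
    finally have "\<theta> * real (Suc n) \<le> 1" using th0 by (simp add: le_divide_eq mult.commute)
    then have "\<theta> \<le> 1 / real (Suc n)" by (simp add: le_divide_eq del: of_nat_Suc)
    then have "0 \<le> dd n" unfolding dd_def using X0 by simp
    moreover have "C \<le> \<beta> n" unfolding C_def \<beta>_def using decseqD[OF beta_decseq, of n N] True by simp
    ultimately show ?thesis by (simp add: mult_right_mono)
  next
    case False
    have "1 / \<theta> < of_int \<lfloor>1 / \<theta>\<rfloor> + 1" by linarith
    also have "\<dots> = real N + 1" using flo by simp
    also have "\<dots> \<le> real (Suc n)" using False by simp
    finally have "1 < \<theta> * real (Suc n)" using th0 by (simp add: divide_less_eq mult.commute)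
    then have "1 / real (Suc n) < \<theta>" by (simp add: divide_less_eq del: of_nat_Suc)
    then have "dd n \<le> 0" unfolding dd_def using X0 by (simp add: mult_nonneg_nonpos)
    moreover have "\<beta> n \<le> C" unfolding C_def \<beta>_def using decseqD[OF beta_decseq, of N n] False by simp
    ultimately show ?thesis by (simp add: mult_right_mono_neg)
  qed
  have "C * (- ln (1 - X) - t * X) \<le> X * FF X - \<theta> * X * (FF X + X * FF' X)"
    by (rule sums_le[OF termw sums_mult[OF Sd] S1])
  moreover have "0 \<le> - ln (1 - X) - t * X"
  proof -
    have "- ln (1 - X) - t * X = (1 - X) * (- ln (1 - X)) + X * (- ln X)"
      unfolding tX by (simp add: algebra_simps)
    moreover have "ln (1 - X) < 0" using X0 X1 by simp
    then have "(1 - X) * ln (1 - X) \<le> 0" using X1 by (intro mult_nonneg_nonpos) auto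
    moreover have "ln X < 0" using X0 X1 by simp
    then have "X * ln X \<le> 0" using X0 by (intro mult_nonneg_nonpos) auto
    ultimately show ?thesis by linarith
  qed
  ultimately have "0 \<le> X * FF X - \<theta> * X * (FF X + X * FF' X)"
    using C0 by (meson mult_nonneg_nonneg order_trans)
  then show ?thesis unfolding X_def[symmetric] \<theta>_def by (simp add: algebra_simps)
qed

definition HH :: "real \<Rightarrow> real" where
  "HH \<tau> = (exp \<tau> / (1 + exp \<tau>)) * FF (exp \<tau> / (1 + exp \<tau>))"

lemma HH_deriv: "DERIV HH \<tau> :> (FF (exp \<tau> / (1 + exp \<tau>)) + (exp \<tau> / (1 + exp \<tau>)) * FF' (exp \<tau> / (1 + exp \<tau>)))
     * ((exp \<tau> / (1 + exp \<tau>)) * (1 - exp \<tau> / (1 + exp \<tau>)))"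
proof -
  define X where "X = exp \<tau> / (1 + exp \<tau>)"
  have ep: "0 < 1 + exp \<tau>" by (simp add: add_pos_pos)
  have X0: "0 < X" unfolding X_def by (simp add: add_pos_pos)
  have X1: "X < 1" unfolding X_def using ep by (simp add: divide_less_eq)
  have ds: "DERIV (\<lambda>\<tau>. exp \<tau> / (1 + exp \<tau>)) \<tau> :> (exp \<tau> * (1 + exp \<tau>) - exp \<tau> * exp \<tau>) / ((1 + exp \<tau>) * (1 + exp \<tau>))"
    using ep by (auto intro!: derivative_eq_intros)
  have "(exp \<tau> * (1 + exp \<tau>) - exp \<tau> * exp \<tau>) / ((1 + exp \<tau>) * (1 + exp \<tau>)) = X * (1 - X)"
    unfolding X_def using ep by (simp add: field_simps)
  then have ds': "DERIV (\<lambda>\<tau>. exp \<tau> / (1 + exp \<tau>)) \<tau> :> X * (1 - X)" using ds by simp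
  have dF: "DERIV FF X :> FF' X" using X0 X1 by (intro FF_deriv) auto
  have "DERIV (\<lambda>\<tau>. FF (exp \<tau> / (1 + exp \<tau>))) \<tau> :> FF' X * (X * (1 - X))"
    using DERIV_chain2[OF dF[unfolded X_def] ds'] unfolding X_def by simp
  from DERIV_mult[OF ds' this] have "DERIV HH \<tau> :> X * (1 - X) * FF X + FF' X * (X * (1 - X)) * X"
    unfolding HH_def[abs_def] X_def .
  then show ?thesis unfolding X_def[symmetric] by (rule DERIV_cong) (simp add: algebra_simps)
qed

lemma HH_nonneg: "0 \<le> HH \<tau>"
proof -
  have ep: "0 < 1 + exp \<tau>" by (simp add: add_pos_pos)
  have X1: "exp \<tau> / (1 + exp \<tau>) < 1" using ep by (simp add: divide_less_eq)
  have "1 \<le> FF (exp \<tau> / (1 + exp \<tau>))" using X1 ep by (intro FF_ge1) auto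
  then show ?thesis unfolding HH_def using ep by simp
qed

lemma part2: assumes "0 \<le> t" "1 \<le> b" shows "HH (b * t) \<le> b * HH t"
proof (cases "t = 0")
  case True
  then show ?thesis using HH_nonneg[of 0] assms by (simp add: mult_le_cancel_right1)
next
  case False
  then have t0: "0 < t" using assms by simp
  have "HH (b * t) / (b * t) \<le> HH t / t"
  proof (rule DERIV_nonpos_imp_nonincreasing[where f = "\<lambda>\<tau>. HH \<tau> / \<tau>"])
    show "t \<le> b * t" using assms t0 by simp
    fix \<tau> assume "t \<le> \<tau>" "\<tau> \<le> b * t"
    then have tau0: "0 < \<tau>" using t0 by simp
    define D where "D = (FF (exp \<tau> / (1 + exp \<tau>)) + (exp \<tau> / (1 + exp \<tau>)) * FF' (exp \<tau> / (1 + exp \<tau>)))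
     * ((exp \<tau> / (1 + exp \<tau>)) * (1 - exp \<tau> / (1 + exp \<tau>)))"
    have "DERIV (\<lambda>\<tau>. HH \<tau> / \<tau>) \<tau> :> (D * \<tau> - HH \<tau> * 1) / (\<tau> * \<tau>)"
      using tau0 HH_deriv[of \<tau>] unfolding D_def[symmetric]
      by (intro DERIV_divide) (auto intro: DERIV_ident)
    moreover have "D * \<tau> \<le> HH \<tau>"
      using key_ineq[OF tau0] unfolding D_def HH_def by (simp add: algebra_simps)
    then have "(D * \<tau> - HH \<tau> * 1) / (\<tau> * \<tau>) \<le> 0"
      by (intro divide_nonpos_nonneg) auto
    ultimately show "\<exists>y. DERIV (\<lambda>\<tau>. HH \<tau> / \<tau>) \<tau> :> y \<and> y \<le> 0" by blast
  qed
  then have "HH (b * t) \<le> HH t / t * (b * t)" using t0 assms by (simp add: divide_le_eq)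
  then show ?thesis using t0 by (simp add: mult.commute)
qed

lemma hyp_FF: "hyp2F1 c d (c + d) x = FF x"
  unfolding hyp2F1_def FF_def AA_def by (rule refl)

end

theorem mainTheorem11:
  fixes a b c d s :: real
  assumes "0 < a" "a \<le> 1" "1 \<le> b"
    and "0 < c" "0 < d" "c * d \<le> 1"
    and "0 < s"
  defines "\<phi> \<equiv> (\<lambda>t::real. max (t powr a) (t powr b))"
    and "g \<equiv> (\<lambda>x::real. x * hyp2F1 c d (c + d) x)"
  shows "g (\<phi> s / (1 + \<phi> s))
           \<le> (b / a) * max ((g (s / (1 + s))) powr a) (g (s / (1 + s)))"
proof -
  note cd = assms(4,5,6)
  have gF: "g x = x * FF c d x" for x unfolding g_def hyp_FF[OF cd] ..
  have X1lt: "s / (1 + s) < 1" using assms by simp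
  have X1pos: "0 < s / (1 + s)" using assms by simp
  have g1nn: "0 \<le> g (s / (1 + s))"
    using FF_ge1[OF cd, of "s / (1+s)"] X1lt X1pos unfolding gF by (intro mult_nonneg_nonneg) auto
  have mx: "g (s / (1 + s)) \<le> max ((g (s / (1 + s))) powr a) (g (s / (1 + s)))" by simp
  have ba: "b \<le> b / a" using assms by (simp add: le_divide_eq mult_le_cancel_left1)
  show ?thesis
  proof (cases "1 \<le> s")
    case True
    have phis: "\<phi> s = s powr b" unfolding \<phi>_def using powr_mono[of a b s] True assms by simp
    define t where "t = ln s"
    have t0: "0 \<le> t" unfolding t_def using True by simp
    have se: "s = exp t" unfolding t_def using assms by simp
    have sb: "s powr b = exp (b * t)" unfolding t_def powr_def using assms by (simp add: mult.commute)
    have "g (\<phi> s / (1 + \<phi> s)) = HH c d (b * t)" unfolding phis sb gF HH_def[OF cd] ..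
    also have "\<dots> \<le> b * HH c d t" by (rule part2[OF cd t0 assms(3)])
    also have "HH c d t = g (s / (1 + s))" unfolding se gF HH_def[OF cd] ..
    also have "b * g (s / (1 + s)) \<le> (b / a) * max ((g (s / (1 + s))) powr a) (g (s / (1 + s)))"
      using ba mx g1nn assms by (intro mult_mono) auto
    finally show ?thesis .
  next
    case False
    then have s1: "s \<le> 1" by simp
    have phis: "\<phi> s = s powr a" unfolding \<phi>_def using powr_mono'[of a b s] s1 assms by simp
    define u where "u = s powr a"
    have su: "s \<le> u" unfolding u_def using powr_mono'[of a 1 s] s1 assms by simp
    have u0: "0 < u" unfolding u_def using assms by simp
    define X1 where "X1 = s / (1 + s)"
    define Xa where "Xa = u / (1 + u)"
    have XX: "X1 \<le> Xa" unfolding X1_def Xa_def using su assms u0 by (simp add: field_simps)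
    have Xa1: "Xa < 1" unfolding Xa_def using u0 by simp
    define E1 where "E1 = (1 - X1) * FF c d X1"
    have E1le: "E1 \<le> 1"
      using EE_antimono[OF cd, of 0 X1] X1pos X1lt unfolding E1_def X1_def FF_def[OF cd] by (simp add: AA_0[OF cd])
    have E1pos: "0 < E1"
      using FF_ge1[OF cd, of X1] X1pos X1lt unfolding E1_def X1_def by simp
    have "g (\<phi> s / (1 + \<phi> s)) = u * ((1 - Xa) * FF c d Xa)"
      unfolding phis u_def[symmetric] gF Xa_def using u0 by (simp add: field_simps)
    also have "\<dots> \<le> u * E1" unfolding E1_def
      using EE_antimono[OF cd, of X1 Xa] XX Xa1 X1pos u0 unfolding X1_def by (intro mult_left_mono) auto
    also have "\<dots> \<le> u * E1 powr a"
      using powr_mono'[of a 1 E1] E1le E1pos assms u0 by (intro mult_left_mono) auto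
    also have "u * E1 powr a = (s * E1) powr a" unfolding u_def using assms E1pos by (simp add: powr_mult)
    also have "s * E1 = g (s / (1 + s))" unfolding E1_def X1_def gF using assms by (simp add: field_simps)
    also have "g (s / (1 + s)) powr a \<le> max ((g (s / (1 + s))) powr a) (g (s / (1 + s)))" by simp
    also have "\<dots> \<le> (b / a) * max ((g (s / (1 + s))) powr a) (g (s / (1 + s)))"
    proof -
      have "1 \<le> b / a" using ba assms by simp
      moreover have "0 \<le> max ((g (s / (1 + s))) powr a) (g (s / (1 + s)))" using g1nn by simp
      ultimately show ?thesis using mult_right_mono[of 1 "b/a" "max ((g (s / (1 + s))) powr a) (g (s / (1 + s)))"]
        by (simp only: mult_1)
    qed
    finally show ?thesis .
  qed
qed

end
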